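(* For $n\ge 6$ let $e(n)$ (resp. $o(n)$) be the number of partitions of $n$ with parts $p_1\ge p_2\ge\dots\ge p_k$ such that (a) $k\ge 3$; (b) the three largest parts are equal, $p_1=p_2=p_3$, this common value is at least $3$, and it is even (resp. odd); (c) the remaining parts $p_4,\dots,p_k$, if present, are distinct; (d) the fourth largest part, if present, satisfies $p_4\le p_3-2$; (e) the smallest part is not $1$. For an integer $t$ put $P_1(t)=\tfrac12(3t^2+t+4)$, $P_2(t)=\tfrac12(3(t+1)^2-t-1)$, $P_3(t)=\tfrac12(3(t+1)^2-t+3)$, $P_4(t)=\tfrac12(3(t+1)^2+t+1)$. Then for every integer $n\ge 6$: (a) $e(n)=o(n)$ if $n\notin\{P_1(t),P_2(t),P_3(t),P_4(t)\}$ for every integer $t\ge 2$; (b) $e(n)=o(n)-1$ if $n=P_1(t)$ or $n=P_4(t)$ for some integer $t\ge 2$; (c) $e(n)=o(n)+1$ if $n=P_2(t)$ or $n=P_3(t)$ for some integer $t\ge 2$. *)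

theory Defs
  imports Main
begin

definition is_partition :: "nat \<Rightarrow> nat list \<Rightarrow> bool" where
  "is_partition n ps \<longleftrightarrow> sorted_wrt (\<ge>) ps \<and> (\<forall>p\<in>set ps. 0 < p) \<and> sum_list ps = n"

definition good_partition :: "bool \<Rightarrow> nat list \<Rightarrow> bool" where
  "good_partition b ps \<longleftrightarrow>
     length ps \<ge> 3 \<and>
     ps ! 0 = ps ! 1 \<and> ps ! 1 = ps ! 2 \<and> ps ! 0 \<ge> 3 \<and> (even (ps ! 0) \<longleftrightarrow> b) \<and>
     distinct (drop 3 ps) \<and>
     (length ps \<ge> 4 \<longrightarrow> ps ! 3 + 2 \<le> ps ! 2) \<and>
     last ps \<noteq> 1"

definition e_count :: "nat \<Rightarrow> nat" where
  "e_count n = card {ps. is_partition n ps \<and> good_partition True ps}"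

definition o_count :: "nat \<Rightarrow> nat" where
  "o_count n = card {ps. is_partition n ps \<and> good_partition False ps}"

definition P1 :: "int \<Rightarrow> int" where "P1 t = (3 * t\<^sup>2 + t + 4) div 2"
definition P2 :: "int \<Rightarrow> int" where "P2 t = (3 * (t + 1)\<^sup>2 - t - 1) div 2"
definition P3 :: "int \<Rightarrow> int" where "P3 t = (3 * (t + 1)\<^sup>2 - t + 3) div 2"
definition P4 :: "int \<Rightarrow> int" where "P4 t = (3 * (t + 1)\<^sup>2 + t + 1) div 2"

end

theory Submission
  imports Defs
begin


definition cnt :: "nat set \<Rightarrow> int \<Rightarrow> nat" where
  "cnt A r = card {S. S \<subseteq> A \<and> int (\<Sum>S) = r}"

lemma cnt_empty: "cnt {} r = (if r = 0 then 1 else 0)"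
proof -
  have "{S. S \<subseteq> {} \<and> int (\<Sum>S) = r} = (if r = 0 then {{}} else {})" by auto
  then show ?thesis unfolding cnt_def by simp
qed

lemma cnt_neg: "r < 0 \<Longrightarrow> cnt A r = 0"
proof -
  assume "r < 0"
  then have "{S. S \<subseteq> A \<and> int (\<Sum>S) = r} = {}" by (auto simp del: of_nat_sum)
  then show ?thesis unfolding cnt_def by (simp only: card.empty)
qed

lemma cnt_insert:
  assumes "finite A" "x \<notin> A"
  shows "cnt (insert x A) r = cnt A r + cnt A (r - int x)"
proof -
  let ?P = "{S. S \<subseteq> A \<and> int (\<Sum>S) = r}"
  let ?Q = "{S. S \<subseteq> A \<and> int (\<Sum>S) = r - int x}"
  have eq: "{S. S \<subseteq> insert x A \<and> int (\<Sum>S) = r} = ?P \<union> insert x ` ?Q"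
  proof (rule set_eqI, rule iffI)
    fix S assume S: "S \<in> {S. S \<subseteq> insert x A \<and> int (\<Sum>S) = r}"
    show "S \<in> ?P \<union> insert x ` ?Q"
    proof (cases "x \<in> S")
      case True
      have "S \<subseteq> insert x A" using S by simp
      then have fS: "finite S" by (rule finite_subset) (simp add: assms(1))
      have h: "\<Sum>S = x + \<Sum>(S - {x})" using True fS by (simp add: sum.remove)
      have r: "int (\<Sum>S) = r" using S by (simp del: of_nat_sum)
      have "int (\<Sum>S) = int x + int (\<Sum>(S - {x}))" using h by (metis of_nat_add)
      then have r2: "int (\<Sum>(S - {x})) = r - int x" using r by linarith
      have "S - {x} \<subseteq> A" using S by auto
      then have q: "S - {x} \<in> ?Q" using r2 by (simp del: of_nat_sum)
      have "S = insert x (S - {x})" using True by auto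
      then have "S \<in> insert x ` ?Q" using q by (rule image_eqI)
      then show ?thesis by (rule UnI2)
    next
      case False
      then show ?thesis using S by auto
    qed
  next
    fix S assume "S \<in> ?P \<union> insert x ` ?Q"
    then show "S \<in> {S. S \<subseteq> insert x A \<and> int (\<Sum>S) = r}"
    proof
      assume "S \<in> ?P" then show ?thesis by auto
    next
      assume "S \<in> insert x ` ?Q"
      then obtain T where T: "T \<in> ?Q" "S = insert x T" by auto
      have "T \<subseteq> A" using T(1) by simp
      then have "finite T" using assms(1) by (rule finite_subset)
      moreover have "x \<notin> T" using T(1) assms(2) by auto
      ultimately have "\<Sum>S = x + \<Sum>T" using T(2) by simp
      then have "int (\<Sum>S) = int x + int (\<Sum>T)" by (metis of_nat_add)
      moreover have "int (\<Sum>T) = r - int x" using T(1) by (simp del: of_nat_sum)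
      ultimately have "int (\<Sum>S) = r" by linarith
      moreover have "S \<subseteq> insert x A" using T \<open>T \<subseteq> A\<close> by auto
      ultimately show ?thesis by (simp del: of_nat_sum)
    qed
  qed
  have fP: "finite ?P" using assms(1) by (simp add: finite_subset[of _ "Pow A"])
  have fQ: "finite ?Q" using assms(1) by (simp add: finite_subset[of _ "Pow A"])
  have disj: "?P \<inter> insert x ` ?Q = {}" using assms(2) by auto
  have inj: "inj_on (insert x) ?Q"
  proof (rule inj_onI)
    fix S T assume "S \<in> ?Q" "T \<in> ?Q" "insert x S = insert x T"
    moreover then have "x \<notin> S" "x \<notin> T" using assms(2) by auto
    ultimately show "S = T" by (metis Diff_insert_absorb)
  qed
  show ?thesis unfolding cnt_def eq
    by (simp only: card_Un_disjoint[OF fP finite_imageI[OF fQ] disj] card_image[OF inj])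
qed

definition T :: "nat \<Rightarrow> nat \<Rightarrow> nat \<Rightarrow> nat \<Rightarrow> nat" where
  "T j d n m = cnt {Suc j..m-d} (int n - int (Suc j * m))"
definition X :: "nat \<Rightarrow> nat \<Rightarrow> nat \<Rightarrow> nat \<Rightarrow> nat" where
  "X j d n m = cnt {Suc (Suc j)..m-d} (int n - int (Suc j * Suc m))"
definition hs :: "nat \<Rightarrow> nat \<Rightarrow> nat \<Rightarrow> nat \<Rightarrow> int" where
  "hs j d n B = (\<Sum>m=j+d..B. (-1)^m * int (T j d n m))"

lemma T_Suc:
  assumes "Suc (j+d) \<le> B"
  shows "T j d n (Suc B) = X j d n B + T (Suc j) (Suc d) (n+d) (Suc B) + X j d n (Suc B)"
proof -
  have e1: "Suc B - d = Suc (B - d)" using assms by simp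
  have e2: "{Suc j..Suc (B-d)} = insert (Suc j) {Suc (Suc j)..Suc (B-d)}"
    using assms by (auto simp: atLeastAtMost_insertL)
  have e3: "{Suc (Suc j)..Suc (B-d)} = insert (Suc (B-d)) {Suc (Suc j)..B-d}"
    using assms by (simp add: atLeastAtMostSuc_conv)
  let ?r = "int n - int (Suc j * Suc B)"
  have "T j d n (Suc B) = cnt {Suc (Suc j)..Suc (B-d)} ?r + cnt {Suc (Suc j)..Suc (B-d)} (?r - int (Suc j))"
    unfolding T_def e1 e2 by (rule cnt_insert) auto
  also have "cnt {Suc (Suc j)..Suc (B-d)} ?r = cnt {Suc (Suc j)..B-d} ?r + cnt {Suc (Suc j)..B-d} (?r - int (Suc (B-d)))"
    unfolding e3 by (rule cnt_insert) auto
  also have "cnt {Suc (Suc j)..B-d} ?r = X j d n B" unfolding X_def by simp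
  also have "cnt {Suc (Suc j)..B-d} (?r - int (Suc (B-d))) = T (Suc j) (Suc d) (n+d) (Suc B)"
    unfolding T_def using assms by (simp add: of_nat_diff algebra_simps)
  also have "cnt {Suc (Suc j)..Suc (B-d)} (?r - int (Suc j)) = X j d n (Suc B)"
    unfolding X_def e1 by (simp add: algebra_simps)
  finally show ?thesis by simp
qed

lemma hs_step:
  assumes "Suc (j+d) \<le> B"
  shows "hs j d n B = (-1)^(j+d) * of_bool (n = Suc j * (j+d)) - (-1)^(j+d) * of_bool (n = Suc j * Suc (j+d))
     + (-1)^B * int (X j d n B) + hs (Suc j) (Suc d) (n+d) B"
  using assms
proof (induction B rule: dec_induct)
  case base
  have s1: "{j+d..Suc (j+d)} = {j+d, Suc (j+d)}" by auto
  have t0: "T j d n (j+d) = (if n = Suc j * (j+d) then 1 else 0)"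
  proof -
    have a: "{Suc j..j + d - d} = {}" by simp
    have b: "(int n - int (Suc j * (j+d)) = 0) = (n = Suc j*(j+d))" by (simp only: right_minus_eq of_nat_eq_iff)
    show ?thesis unfolding T_def a cnt_empty b by (rule refl)
  qed
  have t1: "T j d n (Suc (j+d)) = (if n = Suc j * Suc (j+d) then 1 else 0) + X j d n (Suc (j+d))"
  proof -
    have ce: "\<And>m. cnt {} (int n - int m) = (if n = m then 1 else 0)"
      by (simp only: cnt_empty right_minus_eq of_nat_eq_iff)
    have "{Suc j..Suc (j+d) - d} = insert (Suc j) {}" by auto
    then have "T j d n (Suc (j+d)) = cnt {} (int n - int (Suc j * Suc (j+d))) + cnt {} (int n - int (Suc j * Suc (j+d)) - int (Suc j))"
      unfolding T_def by (simp add: cnt_insert del: of_nat_mult of_nat_Suc)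
    also have "int n - int (Suc j * Suc (j+d)) - int (Suc j) = int n - int (Suc j * Suc (Suc (j+d)))"
      by (simp add: algebra_simps)
    finally have a: "T j d n (Suc (j+d)) = cnt {} (int n - int (Suc j * Suc (j+d))) + cnt {} (int n - int (Suc j * Suc (Suc (j+d))))" .
    have "X j d n (Suc (j+d)) = cnt {} (int n - int (Suc j * Suc (Suc (j+d))))"
      unfolding X_def by simp
    then show ?thesis unfolding a by (simp only: ce)
  qed
  have h0: "hs (Suc j) (Suc d) (n+d) (Suc (j+d)) = 0" unfolding hs_def by simp
  have e: "hs j d n (Suc (j+d)) = (-1)^(j+d) * int (T j d n (j+d)) + (-1)^(Suc(j+d)) * int (T j d n (Suc(j+d)))"
    unfolding hs_def s1 by simp
  have t0': "int (T j d n (j+d)) = of_bool (n = Suc j*(j+d))" using t0 by simp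
  have t1': "int (T j d n (Suc(j+d))) = of_bool (n = Suc j*Suc(j+d)) + int (X j d n (Suc(j+d)))" using t1 by simp
  show ?case unfolding e t0' t1' h0 power_Suc by algebra
next
  case (step B)
  have "hs j d n (Suc B) = hs j d n B + (-1)^(Suc B) * int (T j d n (Suc B))"
    unfolding hs_def using step.hyps by (simp add: sum.cl_ivl_Suc)
  moreover have "hs (Suc j) (Suc d) (n+d) (Suc B) = hs (Suc j) (Suc d) (n+d) B + (-1)^(Suc B) * int (T (Suc j) (Suc d) (n+d) (Suc B))"
    unfolding hs_def using step.hyps by (simp add: sum.cl_ivl_Suc)
  ultimately show ?case using step.IH T_Suc[OF step.hyps(1)] by (simp add: algebra_simps)
qed

lemma T_zero: "n < Suc j * m \<Longrightarrow> T j d n m = 0"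
  unfolding T_def by (rule cnt_neg) linarith

lemma X_zero: "n < Suc j * Suc m \<Longrightarrow> X j d n m = 0"
  unfolding X_def by (rule cnt_neg) linarith

lemma hs_tail: assumes "n \<le> B" "B \<le> B'" shows "hs j d n B' = hs j d n B"
  using assms(2)
proof (induction B' rule: dec_induct)
  case base then show ?case by simp
next
  case (step B')
  have "n < Suc j * Suc B'" using assms(1) step.hyps by (simp add: less_Suc_eq_le trans_le_add1)
  then have "T j d n (Suc B') = 0" by (rule T_zero)
  then show ?case using step by (simp add: hs_def sum.cl_ivl_Suc)
qed

lemma hs_zero: "n < Suc j * (j+d) \<Longrightarrow> hs j d n B = 0"
  unfolding hs_def
proof (rule sum.neutral, rule ballI)
  fix m assume "n < Suc j * (j+d)" "m \<in> {j+d..B}"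
  then have "n < Suc j * m" by (meson atLeastAtMost_iff less_le_trans mult_le_mono2)
  then show "(-1)^m * int (T j d n m) = 0" by (simp add: T_zero)
qed

definition C1 :: "nat \<Rightarrow> nat \<Rightarrow> nat \<Rightarrow> nat \<Rightarrow> bool" where
  "C1 j d n i \<longleftrightarrow> 2*n + 2*d*i + i*i = 2*(Suc j+i)*(j+d+2*i) + i"
definition C2 :: "nat \<Rightarrow> nat \<Rightarrow> nat \<Rightarrow> nat \<Rightarrow> bool" where
  "C2 j d n i \<longleftrightarrow> 2*n + 2*d*i + i*i = 2*(Suc j+i)*(j+d+1+2*i) + i"

lemma C1_0: "C1 j d n 0 \<longleftrightarrow> n = Suc j * (j+d)"
  unfolding C1_def by (rule iffI; simp add: algebra_simps; linarith)
lemma C2_0: "C2 j d n 0 \<longleftrightarrow> n = Suc j * Suc (j+d)"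
  unfolding C2_def by (rule iffI; simp add: algebra_simps; linarith)
lemma C1_Suc: "C1 j d n (Suc i) \<longleftrightarrow> C1 (Suc j) (Suc d) (n+d) i"
  unfolding C1_def by (simp add: algebra_simps)
lemma C2_Suc: "C2 j d n (Suc i) \<longleftrightarrow> C2 (Suc j) (Suc d) (n+d) i"
  unfolding C2_def by (simp add: algebra_simps)
lemma C1_ge: "C1 j d n i \<Longrightarrow> Suc j * (j+d) \<le> n"
  unfolding C1_def by (simp add: algebra_simps)
lemma C2_ge: "C2 j d n i \<Longrightarrow> Suc j * Suc (j+d) \<le> n"
  unfolding C2_def by (simp add: algebra_simps)

definition I1 :: "nat \<Rightarrow> nat \<Rightarrow> nat \<Rightarrow> bool" where "I1 j d n \<longleftrightarrow> (\<exists>i. C1 j d n i)"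
definition I2 :: "nat \<Rightarrow> nat \<Rightarrow> nat \<Rightarrow> bool" where "I2 j d n \<longleftrightarrow> (\<exists>i. C2 j d n i)"

lemma I1_rec: "I1 j d n \<longleftrightarrow> n = Suc j * (j+d) \<or> I1 (Suc j) (Suc d) (n+d)"
  unfolding I1_def by (metis C1_0 C1_Suc not0_implies_Suc)
lemma I2_rec: "I2 j d n \<longleftrightarrow> n = Suc j * Suc (j+d) \<or> I2 (Suc j) (Suc d) (n+d)"
  unfolding I2_def by (metis C2_0 C2_Suc not0_implies_Suc)
lemma I1_ge: "I1 j d n \<Longrightarrow> Suc j * (j+d) \<le> n"
  unfolding I1_def using C1_ge by blast
lemma I2_ge: "I2 j d n \<Longrightarrow> Suc j * Suc (j+d) \<le> n"
  unfolding I2_def using C2_ge by blast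

lemma hs_closed: "n \<le> B \<Longrightarrow> hs j d n B = (-1)^(j+d) * (of_bool (I1 j d n) - of_bool (I2 j d n))"
proof (induction "Suc n - Suc j * (j+d)" arbitrary: j d n B rule: less_induct)
  case less
  show ?case
  proof (cases "n < Suc j * (j+d)")
    case True
    have "\<not> I1 j d n" using I1_ge True by fastforce
    moreover have "\<not> I2 j d n" using I2_ge True
      by (meson le_trans less_le_not_le mult_le_mono2 le_SucI order_refl)
    ultimately show ?thesis using hs_zero[OF True] by simp
  next
    case False
    define B' where "B' = B + n + d + j + 1"
    have bb: "B \<le> B'" "n + d \<le> B'" "Suc (j+d) \<le> B'" unfolding B'_def by auto
    have x0: "X j d n B' = 0"
      by (rule X_zero) (simp add: B'_def less_Suc_eq_le trans_le_add1)
    have exp: "Suc (Suc j) * (Suc j + Suc d) = Suc j * (j+d) + 3*j + d + 4"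
      by (simp add: algebra_simps)
    have lt: "Suc (n+d) - Suc (Suc j) * (Suc j + Suc d) < Suc n - Suc j * (j+d)"
      using False exp by linarith
    have IH: "hs (Suc j) (Suc d) (n+d) B' = (-1)^(Suc j + Suc d) * (of_bool (I1 (Suc j) (Suc d) (n+d)) - of_bool (I2 (Suc j) (Suc d) (n+d)))"
      using less.hyps[OF _ bb(2)] lt by simp
    have h: "hs j d n B = hs j d n B'" using hs_tail[OF less.prems bb(1)] by simp
    have ex1: "\<not> (n = Suc j * (j+d) \<and> I1 (Suc j) (Suc d) (n+d))"
      using I1_ge[of "Suc j" "Suc d" "n+d"] exp by auto
    have ex2: "\<not> (n = Suc j * Suc (j+d) \<and> I2 (Suc j) (Suc d) (n+d))"
    proof -
      have "Suc (Suc j) * Suc (Suc j + Suc d) = Suc j * Suc (j+d) + 3*j + d + 5"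
        by (simp add: algebra_simps)
      then show ?thesis using I2_ge[of "Suc j" "Suc d" "n+d"] by auto
    qed
    have o1: "of_bool (I1 j d n) = (of_bool (n = Suc j * (j+d)) + of_bool (I1 (Suc j) (Suc d) (n+d)) :: int)"
      using I1_rec[of j d n] ex1 by auto
    have o2: "of_bool (I2 j d n) = (of_bool (n = Suc j * Suc (j+d)) + of_bool (I2 (Suc j) (Suc d) (n+d)) :: int)"
      using I2_rec[of j d n] ex2 by auto
    have sg: "(-1::int)^(Suc j + Suc d) = (-1)^(j+d)" by simp
    show ?thesis unfolding h hs_step[OF bb(3)] x0 IH sg o1 o2 by (simp add: algebra_simps)
  qed
qed



lemma bwd:
  assumes a: "3 \<le> a" "even a = b" and S: "S \<subseteq> {2..a-2}" and sm: "3*a + \<Sum>S = n"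
  shows "is_partition n (a#a#a#rev (sorted_list_of_set S)) \<and> good_partition b (a#a#a#rev (sorted_list_of_set S))"
proof -
  let ?L = "sorted_list_of_set S"
  have fin: "finite S" using S finite_subset by blast
  have setL: "set (rev ?L) = S" using fin by simp
  have dL: "distinct (rev ?L)" by simp
  have sL: "sorted_wrt (\<ge>) (rev ?L)" by (simp add: sorted_wrt_rev)
  have le: "\<forall>x\<in>S. x \<le> a" "\<forall>x\<in>S. 2 \<le> x" using S by (auto dest!: subsetD)
  have sumL: "sum_list (rev ?L) = \<Sum>S" using fin by (simp add: distinct_sum_list_conv_Sum)
  have part: "is_partition n (a#a#a#rev ?L)"
    unfolding is_partition_def using sL le setL sumL sm a(1) by auto
  have last: "last (a#a#a#rev ?L) \<noteq> 1"
  proof (cases "rev ?L = []")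
    case True then show ?thesis using a(1) by simp
  next
    case False
    then have "last (a#a#a#rev ?L) = last (rev ?L)" by simp
    moreover have "last (rev ?L) \<in> set (rev ?L)" using False by (rule last_in_set)
    ultimately have "last (a#a#a#rev ?L) \<in> S" using setL by simp
    then show ?thesis using le by fastforce
  qed
  have p4: "4 \<le> length (a#a#a#rev ?L) \<longrightarrow> (a#a#a#rev ?L) ! 3 + 2 \<le> (a#a#a#rev ?L) ! 2"
  proof
    assume "4 \<le> length (a#a#a#rev ?L)"
    then have "rev ?L \<noteq> []" using fin by auto
    then have "(a#a#a#rev ?L) ! 3 = hd (rev ?L)" by (simp add: numeral_3_eq_3 hd_conv_nth)
    moreover have "hd (rev ?L) \<in> set (rev ?L)" using \<open>rev ?L \<noteq> []\<close> by (rule hd_in_set)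
    ultimately have "(a#a#a#rev ?L) ! 3 \<in> {2..a-2}" using setL S by auto
    then show "(a#a#a#rev ?L) ! 3 + 2 \<le> (a#a#a#rev ?L) ! 2" using a(1) by (simp add: numeral_2_eq_2, linarith)
  qed
  have good: "good_partition b (a#a#a#rev ?L)"
    unfolding good_partition_def using a dL last p4 by (simp add: numeral_3_eq_3)
  show ?thesis using part good by simp
qed

lemma fwd:
  assumes P: "is_partition n ps" and G: "good_partition b ps"
  shows "ps = ps!0 # ps!0 # ps!0 # rev (sorted_list_of_set (set (drop 3 ps)))
    \<and> 3 \<le> ps!0 \<and> ps!0 \<le> n \<and> even (ps!0) = b \<and> set (drop 3 ps) \<subseteq> {2..ps!0 - 2}
    \<and> 3 * ps!0 + \<Sum>(set (drop 3 ps)) = n"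
proof -
  define a where "a = ps!0"
  define R where "R = drop 3 ps"
  have len: "length ps \<ge> 3" using G unfolding good_partition_def by simp
  have ps: "ps = a#a#a#R"
  proof -
    obtain x y z R' where "ps = x#y#z#R'" using len
      by (metis Suc_le_length_iff numeral_3_eq_3)
    then show ?thesis using G unfolding good_partition_def a_def R_def by simp
  qed
  have a3: "3 \<le> a" "even a = b" using G unfolding good_partition_def a_def by auto
  have dR: "distinct R" using G unfolding good_partition_def R_def by simp
  have sorted: "sorted_wrt (\<ge>) (a#a#a#R)" using P ps unfolding is_partition_def by simp
  have pos: "\<forall>x\<in>set R. 0 < x" using P ps unfolding is_partition_def by simp
  have sR: "sorted_wrt (\<ge>) R" using sorted by simp
  have sum: "3*a + sum_list R = n" using P ps unfolding is_partition_def by simp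
  have sumR: "sum_list R = \<Sum>(set R)" using dR by (simp add: distinct_sum_list_conv_Sum)
  have Req: "R = rev (sorted_list_of_set (set R))"
  proof -
    have "sorted (rev R)" using sR by (simp add: sorted_wrt_rev)
    moreover have "distinct (rev R)" using dR by simp
    ultimately have "sorted_list_of_set (set (rev R)) = rev R"
      by (simp only: sorted_list_of_set_sort_remdups distinct_remdups_id sorted_sort_id)
    then show ?thesis by simp
  qed
  have bounds: "set R \<subseteq> {2..a-2}"
  proof
    fix x assume x: "x \<in> set R"
    then obtain r R' where R: "R = r # R'" by (cases R) auto
    have "x \<le> r" using x sR R by auto
    moreover have "r + 2 \<le> a"
      using G unfolding good_partition_def using ps R by (simp add: numeral_3_eq_3)
    moreover have "last R \<le> x"
    proof -
      obtain h t where rt: "rev R = h # t" using R by (cases "rev R") auto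
      have h: "h = last R" using rt hd_rev[of R] by simp
      have "sorted (h # t)" using sR rt by (metis sorted_wrt_rev)
      moreover have "x \<in> set (h # t)" using x rt by (metis set_rev)
      ultimately show ?thesis using h by auto
    qed
    moreover have "last R \<noteq> 1" using G ps R unfolding good_partition_def by simp
    moreover have "0 < last R" using pos R by simp
    ultimately show "x \<in> {2..a-2}" by simp
  qed
  have ps2: "ps = a#a#a#rev (sorted_list_of_set (set R))" using ps Req by argo
  have an: "a \<le> n" using sum by linarith
  show ?thesis unfolding a_def[symmetric] R_def[symmetric]
    using ps2 a3 an bounds sum sumR by simp
qed

lemma count_eq:
  "card {ps. is_partition n ps \<and> good_partition b ps}
   = (\<Sum>a\<in>{a\<in>{3..n}. even a = b}. card {S. S \<subseteq> {2..a-2} \<and> 3*a + \<Sum>S = n})"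
proof -
  define A where "A = {a\<in>{3..n}. even a = b}"
  define F where "F a = {S. S \<subseteq> {2..a-2} \<and> 3*a + \<Sum>S = n}" for a
  define \<psi> where "\<psi> = (\<lambda>(a::nat, S). a#a#a#rev (sorted_list_of_set S))"
  have finA: "finite A" unfolding A_def by simp
  have finF: "\<forall>a\<in>A. finite (F a)" unfolding F_def by (simp add: finite_subset[of _ "Pow {2..a-2}" for a])
  have inj: "inj_on \<psi> (Sigma A F)"
  proof (rule inj_onI)
    fix p q assume p: "p \<in> Sigma A F" and q: "q \<in> Sigma A F" and e: "\<psi> p = \<psi> q"
    obtain a S where pa: "p = (a,S)" by (cases p)
    obtain a' S' where qa: "q = (a',S')" by (cases q)
    have fS: "finite S" "finite S'" using p q pa qa unfolding F_def by (auto intro: finite_subset)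
    have "a = a'" "sorted_list_of_set S = sorted_list_of_set S'" using e pa qa unfolding \<psi>_def by auto
    then have "set (sorted_list_of_set S) = set (sorted_list_of_set S')" by simp
    then have "S = S'" using fS by simp
    then show "p = q" using pa qa \<open>a = a'\<close> by simp
  qed
  have img: "{ps. is_partition n ps \<and> good_partition b ps} = \<psi> ` Sigma A F"
  proof (rule set_eqI, rule iffI)
    fix ps assume "ps \<in> {ps. is_partition n ps \<and> good_partition b ps}"
    then have f: "ps = ps!0 # ps!0 # ps!0 # rev (sorted_list_of_set (set (drop 3 ps)))
    \<and> 3 \<le> ps!0 \<and> ps!0 \<le> n \<and> even (ps!0) = b \<and> set (drop 3 ps) \<subseteq> {2..ps!0 - 2}
    \<and> 3 * ps!0 + \<Sum>(set (drop 3 ps)) = n" using fwd by blast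
    then have "(ps!0, set (drop 3 ps)) \<in> Sigma A F" unfolding A_def F_def by auto
    moreover have "ps = \<psi> (ps!0, set (drop 3 ps))" using f unfolding \<psi>_def by simp
    ultimately show "ps \<in> \<psi> ` Sigma A F" by blast
  next
    fix ps assume "ps \<in> \<psi> ` Sigma A F"
    then obtain a S where "a \<in> A" "S \<in> F a" "ps = \<psi> (a,S)" by auto
    then show "ps \<in> {ps. is_partition n ps \<and> good_partition b ps}"
      using bwd[of a b S n] unfolding A_def F_def \<psi>_def by auto
  qed
  show ?thesis unfolding img card_image[OF inj] card_SigmaI[OF finA finF]
    unfolding A_def F_def by simp
qed



lemma C1_int: "C1 j d n i \<longleftrightarrow> 2*int n + 2*int d*int i + int i*int i = 2*(int j+1+int i)*(int j+int d+2*int i) + int i"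
  unfolding C1_def by (subst of_nat_eq_iff[symmetric, where 'a=int]) (simp add: algebra_simps)
lemma C2_int: "C2 j d n i \<longleftrightarrow> 2*int n + 2*int d*int i + int i*int i = 2*(int j+1+int i)*(int j+int d+1+2*int i) + int i"
  unfolding C2_def by (subst of_nat_eq_iff[symmetric, where 'a=int]) (simp add: algebra_simps)

lemma even_tt: "even ((t::int)*(t+1))" by simp

lemma P1_eq: "2 * P1 t = 3*t^2+t+4"
proof -
  have "3*t^2+t+4 = 2*(t^2+2) + t*(t+1)" by (simp add: algebra_simps power2_eq_square)
  then have "even (3*t^2+t+4)" using even_tt[of t] by simp
  then show ?thesis unfolding P1_def by simp
qed
lemma P2_eq: "2 * P2 t = 3*t^2+5*t+2"
proof -
  have e: "3*(t+1)^2-t-1 = 3*t^2+5*t+2" by (simp add: algebra_simps power2_eq_square)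
  have "3*t^2+5*t+2 = 2*(t^2+2*t+1) + t*(t+1)" by (simp add: algebra_simps power2_eq_square)
  then have "even (3*t^2+5*t+2)" using even_tt[of t] by simp
  then show ?thesis unfolding P2_def e by simp
qed
lemma P3_eq: "2 * P3 t = 3*t^2+5*t+6"
proof -
  have e: "3*(t+1)^2-t+3 = 3*t^2+5*t+6" by (simp add: algebra_simps power2_eq_square)
  have "3*t^2+5*t+6 = 2*(t^2+2*t+3) + t*(t+1)" by (simp add: algebra_simps power2_eq_square)
  then have "even (3*t^2+5*t+6)" using even_tt[of t] by simp
  then show ?thesis unfolding P3_def e by simp
qed
lemma P4_eq: "2 * P4 t = 3*t^2+7*t+4"
proof -
  have e: "3*(t+1)^2+t+1 = 3*t^2+7*t+4" by (simp add: algebra_simps power2_eq_square)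
  have "3*t^2+7*t+4 = 2*(t^2+3*t+2) + t*(t+1)" by (simp add: algebra_simps power2_eq_square)
  then have "even (3*t^2+7*t+4)" using even_tt[of t] by simp
  then show ?thesis unfolding P4_def e by simp
qed

lemma I1_22: "I1 2 2 m \<longleftrightarrow> (\<exists>t\<ge>2. 2*int m = 3*t^2+5*t+2)"
proof
  assume "I1 2 2 m"
  then obtain i where "C1 2 2 m i" unfolding I1_def by blast
  then have E: "2*int m + 2*2*int i + int i*int i = 2*(2+1+int i)*(2+2+2*int i) + int i"
    unfolding C1_int by simp
  have R: "2*(2+1+int i)*(2+2+2*int i) + int i - 2*2*int i - int i*int i = 3*(int i+2)^2+5*(int i+2)+2"
    by (simp add: power2_eq_square algebra_simps)
  have "2*int m = 3*(int i+2)^2+5*(int i+2)+2" using E R by linarith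
  then show "\<exists>t\<ge>2. 2*int m = 3*t^2+5*t+2" by (intro exI[of _ "int i + 2"]) simp
next
  assume "\<exists>t\<ge>2. 2*int m = 3*t^2+5*t+2"
  then obtain t where t: "t \<ge> 2" "2*int m = 3*t^2+5*t+2" by blast
  define i where "i = nat (t - 2)"
  have ti: "t = int i + 2" using t(1) unfolding i_def by simp
  have R: "2*(2+1+int i)*(2+2+2*int i) + int i - 2*2*int i - int i*int i = 3*(int i+2)^2+5*(int i+2)+2"
    by (simp add: power2_eq_square algebra_simps)
  have E: "2*int m + 2*2*int i + int i*int i = 2*(2+1+int i)*(2+2+2*int i) + int i"
    using t(2) R unfolding ti by linarith
  have "C1 2 2 m i" unfolding C1_int using E by simp
  then show "I1 2 2 m" unfolding I1_def by blast
qed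

lemma I2_22: "I2 2 2 m \<longleftrightarrow> (\<exists>t\<ge>2. 2*int m = 3*t^2+7*t+4)"
proof
  assume "I2 2 2 m"
  then obtain i where "C2 2 2 m i" unfolding I2_def by blast
  then have E: "2*int m + 2*2*int i + int i*int i = 2*(2+1+int i)*(2+2+1+2*int i) + int i"
    unfolding C2_int by simp
  have R: "2*(2+1+int i)*(2+2+1+2*int i) + int i - 2*2*int i - int i*int i = 3*(int i+2)^2+7*(int i+2)+4"
    by (simp add: power2_eq_square algebra_simps)
  have "2*int m = 3*(int i+2)^2+7*(int i+2)+4" using E R by linarith
  then show "\<exists>t\<ge>2. 2*int m = 3*t^2+7*t+4" by (intro exI[of _ "int i + 2"]) simp
next
  assume "\<exists>t\<ge>2. 2*int m = 3*t^2+7*t+4"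
  then obtain t where t: "t \<ge> 2" "2*int m = 3*t^2+7*t+4" by blast
  define i where "i = nat (t - 2)"
  have ti: "t = int i + 2" using t(1) unfolding i_def by simp
  have R: "2*(2+1+int i)*(2+2+1+2*int i) + int i - 2*2*int i - int i*int i = 3*(int i+2)^2+7*(int i+2)+4"
    by (simp add: power2_eq_square algebra_simps)
  have E: "2*int m + 2*2*int i + int i*int i = 2*(2+1+int i)*(2+2+1+2*int i) + int i"
    using t(2) R unfolding ti by linarith
  have "C2 2 2 m i" unfolding C2_int using E by simp
  then show "I2 2 2 m" unfolding I2_def by blast
qed



lemma mono3: "0 \<le> x \<Longrightarrow> x \<le> y \<Longrightarrow> 0 \<le> a \<Longrightarrow> 3*x^2 + a*x \<le> 3*y^2 + a*(y::int)"
proof -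
  assume h: "0 \<le> x" "x \<le> y" "0 \<le> a"
  have "x^2 \<le> y^2" using h by (intro power_mono) auto
  moreover have "a*x \<le> a*y" using h by (intro mult_left_mono) auto
  ultimately show ?thesis by linarith
qed

lemma quad_neq:
  fixes t s a b a' b' :: int
  assumes "t \<ge> 2" "s \<ge> 2" "0 \<le> a" "0 \<le> a'"
    and H1: "\<forall>u\<ge>2. 3*(u-1)^2 + a*(u-1) + b < 3*u^2 + a'*u + b'"
    and H2: "\<forall>u\<ge>2. 3*(u-1)^2 + a'*(u-1) + b' < 3*u^2 + a*u + b"
    and H3: "\<forall>u\<ge>2. a*u + b \<noteq> a'*u + b'"
  shows "3*t^2+a*t+b \<noteq> 3*s^2+a'*s+b'"
proof (cases "t < s")
  case True
  have "3*t^2 + a*t \<le> 3*(s-1)^2 + a*(s-1)" using True assms by (intro mono3) auto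
  moreover have "3*(s-1)^2 + a*(s-1) + b < 3*s^2 + a'*s + b'" using H1 assms(2) by blast
  ultimately show ?thesis by linarith
next
  case False
  show ?thesis
  proof (cases "s < t")
    case True
    have "3*s^2 + a'*s \<le> 3*(t-1)^2 + a'*(t-1)" using True assms by (intro mono3) auto
    moreover have "3*(t-1)^2 + a'*(t-1) + b' < 3*t^2 + a*t + b" using H2 assms(1) by blast
    ultimately show ?thesis by linarith
  next
    case False
    then have "t = s" using \<open>\<not> t < s\<close> by simp
    then show ?thesis using H3 assms(1) by auto
  qed
qed


lemma n12: "t \<ge> 2 \<Longrightarrow> s \<ge> 2 \<Longrightarrow> P1 t \<noteq> P2 s"
proof -
  assume "t \<ge> 2" "s \<ge> 2"
  then have "3*t^2+1*t+4 \<noteq> 3*s^2+5*s+(2::int)" by (rule quad_neq; simp add: power2_eq_square algebra_simps)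
  then show ?thesis using P1_eq[of t] P2_eq[of s] by auto
qed

lemma n13: "t \<ge> 2 \<Longrightarrow> s \<ge> 2 \<Longrightarrow> P1 t \<noteq> P3 s"
proof -
  assume "t \<ge> 2" "s \<ge> 2"
  then have "3*t^2+1*t+4 \<noteq> 3*s^2+5*s+(6::int)" by (rule quad_neq; simp add: power2_eq_square algebra_simps)
  then show ?thesis using P1_eq[of t] P3_eq[of s] by auto
qed

lemma n14: "t \<ge> 2 \<Longrightarrow> s \<ge> 2 \<Longrightarrow> P1 t \<noteq> P4 s"
proof -
  assume "t \<ge> 2" "s \<ge> 2"
  then have "3*t^2+1*t+4 \<noteq> 3*s^2+7*s+(4::int)" by (rule quad_neq; simp add: power2_eq_square algebra_simps)
  then show ?thesis using P1_eq[of t] P4_eq[of s] by auto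
qed

lemma n23: "t \<ge> 2 \<Longrightarrow> s \<ge> 2 \<Longrightarrow> P2 t \<noteq> P3 s"
proof -
  assume "t \<ge> 2" "s \<ge> 2"
  then have "3*t^2+5*t+2 \<noteq> 3*s^2+5*s+(6::int)" by (rule quad_neq; simp add: power2_eq_square algebra_simps)
  then show ?thesis using P2_eq[of t] P3_eq[of s] by auto
qed

lemma n24: "t \<ge> 2 \<Longrightarrow> s \<ge> 2 \<Longrightarrow> P2 t \<noteq> P4 s"
proof -
  assume "t \<ge> 2" "s \<ge> 2"
  then have "3*t^2+5*t+2 \<noteq> 3*s^2+7*s+(4::int)" by (rule quad_neq; simp add: power2_eq_square algebra_simps)
  then show ?thesis using P2_eq[of t] P4_eq[of s] by auto
qed

lemma n34: "t \<ge> 2 \<Longrightarrow> s \<ge> 2 \<Longrightarrow> P3 t \<noteq> P4 s"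
proof -
  assume "t \<ge> 2" "s \<ge> 2"
  then have "3*t^2+5*t+6 \<noteq> 3*s^2+7*s+(4::int)" by (rule quad_neq; simp add: power2_eq_square algebra_simps)
  then show ?thesis using P3_eq[of t] P4_eq[of s] by auto
qed

lemma n11: "t \<ge> 3 \<Longrightarrow> P1 t \<noteq> P1 2"
proof -
  assume "t \<ge> 3"
  then have "3*3^2 + 1*3 \<le> 3*t^2 + 1*(t::int)" by (intro mono3) auto
  moreover have "2 * P1 2 = 18" by (simp add: P1_def)
  ultimately show ?thesis using P1_eq[of t] by auto
qed

lemma diff_sum:
  "int (e_count n) - int (o_count n) = (\<Sum>a\<in>{3..n}. (-1)^a * int (card {S. S \<subseteq> {2..a-2} \<and> 3*a + \<Sum>S = n}))"
proof -
  define c where "c a = int (card {S. S \<subseteq> {2..a-2} \<and> 3*a + \<Sum>S = n})" for a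
  have e: "int (e_count n) = (\<Sum>a\<in>{3..n} \<inter> {a. even a}. c a)"
    unfolding e_count_def count_eq c_def of_nat_sum by (rule sum.cong) auto
  have o: "int (o_count n) = (\<Sum>a\<in>{3..n} \<inter> - {a. even a}. c a)"
    unfolding o_count_def count_eq c_def of_nat_sum by (rule sum.cong) auto
  have "(\<Sum>a\<in>{3..n}. (-1)^a * c a) = (\<Sum>a\<in>{3..n}. if even a then c a else - c a)"
    by (rule sum.cong) auto
  also have "\<dots> = (\<Sum>a\<in>{3..n} \<inter> {a. even a}. c a) + (\<Sum>a\<in>{3..n} \<inter> - {a. even a}. - c a)"
    by (rule sum.If_cases) simp
  finally show ?thesis unfolding e o c_def[symmetric] by (simp add: sum_negf)
qed

lemma card_cnt: "card {S. S \<subseteq> {2..a-2} \<and> 3*a + \<Sum>S = n} = cnt {2..a-2} (int n - int (3*a))"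
proof -
  have "\<And>s. (3*a + s = n) = (int s = int n - int (3*a))" by auto
  then show ?thesis unfolding cnt_def by (simp only:)
qed

lemma main_sum:
  assumes "n \<ge> 6"
  shows "int (e_count n) - int (o_count n) = - of_bool (n = 9) + hs 2 2 n n + hs 2 2 (n-2) n"
proof -
  have split: "{3..n} = insert 3 {4..n}" using assms by (simp add: atLeastAtMost_insertL[symmetric])
  have a3: "int (cnt {2..3-2} (int n - int (3*3))) = of_bool (n = 9)"
    by (simp add: cnt_empty)
  have a4: "(-1)^a * int (cnt {2..a-2} (int n - int (3*a))) = (-1)^a * int (T 2 2 n a) + (-1)^a * int (T 2 2 (n-2) a)"
    if "a \<in> {4..n}" for a
  proof -
    have "{2..a-2} = insert 2 {3..a-2}" using that by (auto simp: atLeastAtMost_insertL[symmetric])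
    then have "cnt {2..a-2} (int n - int (3*a)) = cnt {3..a-2} (int n - int (3*a)) + cnt {3..a-2} (int n - int (3*a) - 2)"
      by (simp add: cnt_insert)
    moreover have "T 2 2 n a = cnt {3..a-2} (int n - int (3*a))" unfolding T_def by (simp add: numeral_3_eq_3)
    moreover have "T 2 2 (n-2) a = cnt {3..a-2} (int n - int (3*a) - 2)" unfolding T_def using assms
      by (simp add: numeral_3_eq_3 of_nat_diff algebra_simps)
    ultimately show ?thesis by (simp add: algebra_simps)
  qed
  have "int (e_count n) - int (o_count n) = (\<Sum>a\<in>{3..n}. (-1)^a * int (cnt {2..a-2} (int n - int (3*a))))"
    unfolding diff_sum card_cnt by simp
  also have "\<dots> = (-1)^3 * int (cnt {2..3-2} (int n - int (3*3))) + (\<Sum>a\<in>{4..n}. (-1)^a * int (cnt {2..a-2} (int n - int (3*a))))"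
    unfolding split by (subst sum.insert) auto
  also have "(\<Sum>a\<in>{4..n}. (-1)^a * int (cnt {2..a-2} (int n - int (3*a)))) = (\<Sum>a\<in>{4..n}. (-1)^a * int (T 2 2 n a) + (-1)^a * int (T 2 2 (n-2) a))"
    by (rule sum.cong[OF refl a4])
  also have "\<dots> = hs 2 2 n n + hs 2 2 (n-2) n" unfolding hs_def by (simp add: sum.distrib)
  finally show ?thesis using a3 by simp
qed

lemma A2_iff: "I1 2 2 n \<longleftrightarrow> (\<exists>t\<ge>2. int n = P2 t)"
  unfolding I1_22 using P2_eq by (metis mult_cancel_left zero_neq_numeral)
lemma A4_iff: "I2 2 2 n \<longleftrightarrow> (\<exists>t\<ge>2. int n = P4 t)"
  unfolding I2_22 using P4_eq by (metis mult_cancel_left zero_neq_numeral)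
lemma A3_iff: "n \<ge> 2 \<Longrightarrow> I1 2 2 (n-2) \<longleftrightarrow> (\<exists>t\<ge>2. int n = P3 t)"
proof -
  assume n: "n \<ge> 2"
  have "\<And>t::int. (2 * int (n-2) = 3*t^2+5*t+2) \<longleftrightarrow> (int n = P3 t)"
  proof -
    fix t :: int
    have "(2 * int (n-2) = 3*t^2+5*t+2) \<longleftrightarrow> (2 * int n = 2 * P3 t)" using n P3_eq[of t] by (simp add: of_nat_diff algebra_simps)
    then show "(2 * int (n-2) = 3*t^2+5*t+2) \<longleftrightarrow> (int n = P3 t)" by simp
  qed
  then show ?thesis unfolding I1_22 by simp
qed
lemma A1_iff: "n \<ge> 2 \<Longrightarrow> I2 2 2 (n-2) \<longleftrightarrow> (\<exists>t\<ge>3. int n = P1 t)"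
proof -
  assume n: "n \<ge> 2"
  have eq: "\<And>t::int. (2 * int (n-2) = 3*t^2+7*t+4) \<longleftrightarrow> (int n = P1 (t+1))"
  proof -
    fix t :: int
    have "3*(t+1)^2+(t+1)+4 = 3*t^2+7*t+8" by (simp add: power2_eq_square algebra_simps)
    then have "(2 * int (n-2) = 3*t^2+7*t+4) \<longleftrightarrow> (2 * int n = 2 * P1 (t+1))" using n P1_eq[of "t+1"] by (simp add: of_nat_diff algebra_simps)
    then show "(2 * int (n-2) = 3*t^2+7*t+4) \<longleftrightarrow> (int n = P1 (t+1))" by simp
  qed
  show ?thesis unfolding I2_22 eq
  proof
    assume "\<exists>t\<ge>2. int n = P1 (t + 1)"
    then obtain t where "t \<ge> 2" "int n = P1 (t+1)" by blast
    then show "\<exists>t\<ge>3. int n = P1 t" by (intro exI[of _ "t+1"]) auto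
  next
    assume "\<exists>t\<ge>3. int n = P1 t"
    then obtain t where "t \<ge> 3" "int n = P1 t" by blast
    then show "\<exists>t\<ge>2. int n = P1 (t + 1)" by (intro exI[of _ "t-1"]) auto
  qed
qed

lemma D_formula:
  assumes "n \<ge> 6"
  shows "int (e_count n) - int (o_count n) = - of_bool (int n = P1 2) - of_bool (\<exists>t\<ge>3. int n = P1 t)
     + of_bool (\<exists>t\<ge>2. int n = P2 t) + of_bool (\<exists>t\<ge>2. int n = P3 t) - of_bool (\<exists>t\<ge>2. int n = P4 t)"
proof -
  have p: "P1 2 = 9" by (simp add: P1_def)
  have "(n = 9) = (int n = P1 2)" unfolding p by auto
  moreover have "hs 2 2 n n = of_bool (\<exists>t\<ge>2. int n = P2 t) - of_bool (\<exists>t\<ge>2. int n = P4 t)"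
    using hs_closed[of n n 2 2] A2_iff A4_iff by simp
  moreover have "hs 2 2 (n-2) n = of_bool (\<exists>t\<ge>2. int n = P3 t) - of_bool (\<exists>t\<ge>3. int n = P1 t)"
    using hs_closed[of "n-2" n 2 2] A3_iff A1_iff assms by simp
  ultimately show ?thesis using main_sum[OF assms] by simp
qed


theorem corollary4p8:
  fixes n :: nat
  assumes "n \<ge> 6"
  shows "((\<forall>t::int. t \<ge> 2 \<longrightarrow> int n \<notin> {P1 t, P2 t, P3 t, P4 t})
           \<longrightarrow> e_count n = o_count n) \<and>
         ((\<exists>t::int. t \<ge> 2 \<and> (int n = P1 t \<or> int n = P4 t))
           \<longrightarrow> int (e_count n) = int (o_count n) - 1) \<and>
         ((\<exists>t::int. t \<ge> 2 \<and> (int n = P2 t \<or> int n = P3 t))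
           \<longrightarrow> e_count n = o_count n + 1)"

proof -
  define A0 where "A0 \<longleftrightarrow> int n = P1 2"
  define A1 where "A1 \<longleftrightarrow> (\<exists>t\<ge>3. int n = P1 t)"
  define A2 where "A2 \<longleftrightarrow> (\<exists>t\<ge>2. int n = P2 t)"
  define A3 where "A3 \<longleftrightarrow> (\<exists>t\<ge>2. int n = P3 t)"
  define A4 where "A4 \<longleftrightarrow> (\<exists>t\<ge>2. int n = P4 t)"
  have D: "int (e_count n) - int (o_count n) = - of_bool A0 - of_bool A1 + of_bool A2 + of_bool A3 - of_bool A4"
    unfolding A0_def A1_def A2_def A3_def A4_def by (rule D_formula[OF assms])
  have two: "(2::int) \<ge> 2" by simp
  show ?thesis
  proof (intro conjI impI)
    assume H: "\<forall>t::int. t \<ge> 2 \<longrightarrow> int n \<notin> {P1 t, P2 t, P3 t, P4 t}"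
    have H': "\<And>t. t \<ge> 2 \<Longrightarrow> int n \<noteq> P1 t \<and> int n \<noteq> P2 t \<and> int n \<noteq> P3 t \<and> int n \<noteq> P4 t"
      using H by auto
    have "\<not> A0" unfolding A0_def using H'[OF two] by auto
    moreover have "\<not> A1" unfolding A1_def
    proof clarify
      fix t :: int assume "t \<ge> 3" "int n = P1 t" then show False using H'[of t] by auto
    qed
    moreover have "\<not> A2" unfolding A2_def
    proof clarify
      fix t :: int assume "t \<ge> 2" "int n = P2 t" then show False using H'[of t] by auto
    qed
    moreover have "\<not> A3" unfolding A3_def
    proof clarify
      fix t :: int assume "t \<ge> 2" "int n = P3 t" then show False using H'[of t] by auto
    qed
    moreover have "\<not> A4" unfolding A4_def
    proof clarify
      fix t :: int assume "t \<ge> 2" "int n = P4 t" then show False using H'[of t] by auto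
    qed
    ultimately have "\<not> A0 \<and> \<not> A1 \<and> \<not> A2 \<and> \<not> A3 \<and> \<not> A4" by blast
    then show "e_count n = o_count n" using D by simp
  next
    assume "\<exists>t::int. t \<ge> 2 \<and> (int n = P1 t \<or> int n = P4 t)"
    then obtain t where t: "t \<ge> 2" "int n = P1 t \<or> int n = P4 t" by blast
    have nA2: "\<not> A2" unfolding A2_def using t n12 n24 by metis
    have nA3: "\<not> A3" unfolding A3_def using t n13 n34 by metis
    have "of_bool A0 + of_bool A1 + of_bool A4 = (1::int)"
    proof (cases "int n = P1 t")
      case True
      show ?thesis
      proof (cases "t = 2")
        case True
        then have "A0" "\<not> A1" "\<not> A4" unfolding A0_def A1_def A4_def
          using \<open>int n = P1 t\<close> n11 n14 two by metis+
        then show ?thesis by simp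
      next
        case False
        have t3: "t \<ge> 3" using False t(1) by simp
        have "\<not> A0" unfolding A0_def using \<open>int n = P1 t\<close> n11 t3 by metis
        moreover have "A1" unfolding A1_def using \<open>int n = P1 t\<close> t3 by blast
        moreover have "\<not> A4" unfolding A4_def using \<open>int n = P1 t\<close> n14 t(1) by metis
        ultimately show ?thesis by simp
      qed
    next
      case False
      then have "int n = P4 t" using t by blast
      have "\<not> A0" unfolding A0_def using \<open>int n = P4 t\<close> n14 t(1) two by metis
      moreover have "\<not> A1" unfolding A1_def
      proof clarify
        fix s :: int assume "s \<ge> 3" "int n = P1 s" then show False using n14[of s t] \<open>int n = P4 t\<close> t(1) by simp
      qed
      moreover have "A4" unfolding A4_def using \<open>int n = P4 t\<close> t(1) by blast
      ultimately show ?thesis by simp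
    qed
    then show "int (e_count n) = int (o_count n) - 1" using D nA2 nA3 by simp
  next
    assume "\<exists>t::int. t \<ge> 2 \<and> (int n = P2 t \<or> int n = P3 t)"
    then obtain t where t: "t \<ge> 2" "int n = P2 t \<or> int n = P3 t" by blast
    have nA0: "\<not> A0" unfolding A0_def using t n12 n13 two by metis
    have nA1: "\<not> A1" unfolding A1_def
    proof clarify
      fix s :: int assume "s \<ge> 3" "int n = P1 s" then show False using n12[of s t] n13[of s t] t by auto
    qed
    have nA4: "\<not> A4" unfolding A4_def using t n24 n34 by metis
    have "of_bool A2 + of_bool A3 = (1::int)"
    proof (cases "int n = P2 t")
      case True
      have "A2" unfolding A2_def using True t(1) by blast
      moreover have "\<not> A3" unfolding A3_def using True n23 t(1) by metis
      ultimately show ?thesis by simp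
    next
      case False
      then have "int n = P3 t" using t by blast
      have "\<not> A2" unfolding A2_def using \<open>int n = P3 t\<close> n23 t(1) by metis
      moreover have "A3" unfolding A3_def using \<open>int n = P3 t\<close> t(1) by blast
      ultimately show ?thesis by simp
    qed
    then have "int (e_count n) = int (o_count n) + 1" using D nA0 nA1 nA4 by simp
    then show "e_count n = o_count n + 1" by simp
  qed
qed


end
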